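(* For $\sigma>0$ let $\mathcal H_\sigma$ denote the RKHS of the Gaussian kernel $k_\sigma(x,y) = \exp(-\|x-y\|^2/(2\sigma^2))$ on $\mathbb R^d$, with norm $\|\cdot\|_\sigma$. Let $x_1,\dots,x_n\in\mathbb R^d$, $a,b\in\mathbb R^n$, $f = \sum_{i=1}^n a_i k_\sigma(x_i,\cdot)$ and $g = \sum_{i=1}^n b_i k_\sigma(x_i,\cdot)$. Let $K$ be the $n\times n$ matrix with $K_{ij} = k_{\sqrt2\sigma}(x_i,x_j)$, and let $D_a = \operatorname{diag}(a)$, $D_b = \operatorname{diag}(b)$. Then $$\|fg\|_{\sigma/\sqrt2}^2 = \operatorname{tr}\big((D_aK)^2(D_bK)^2\big).$$ *)

theory Defs
  imports "HOL-Analysis.Euclidean_Space" "Jordan_Normal_Form.Matrix"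
begin

definition gauss_kernel :: "real \<Rightarrow> 'a::euclidean_space \<Rightarrow> 'a \<Rightarrow> real" where
  "gauss_kernel \<sigma> x y = exp (- (norm (x - y))\<^sup>2 / (2 * \<sigma>\<^sup>2))"

text \<open>Norm of a function in the reproducing kernel Hilbert space of a positive
  definite kernel k (Aronszajn): the supremum of |sum c_i f(z_i)| over all finite
  families with sum c_i c_j k(z_i,z_j) <= 1.  For f in the RKHS this equals its
  RKHS norm (the evaluation functionals' combinations are dense, and
  sum c_i f(z_i) = <f, sum c_i k(z_i,.)>).\<close>
definition rkhs_norm :: "('a \<Rightarrow> 'a \<Rightarrow> real) \<Rightarrow> ('a \<Rightarrow> real) \<Rightarrow> real" where
  "rkhs_norm k f = Sup {\<bar>\<Sum>i<m. c i * f (z i)\<bar> | (m::nat) c z.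
      (\<Sum>i<m. \<Sum>j<m. c i * c j * k (z i) (z j)) \<le> 1}"

definition trace :: "'a::comm_ring_1 mat \<Rightarrow> 'a" where
  "trace A = (\<Sum>i<dim_row A. A $$ (i, i))"

definition in_rkhs :: "('a \<Rightarrow> 'a \<Rightarrow> real) \<Rightarrow> ('a \<Rightarrow> real) \<Rightarrow> bool" where
  "in_rkhs k f \<longleftrightarrow> bdd_above {\<bar>\<Sum>i<m. c i * f (z i)\<bar> | (m::nat) c z.
      (\<Sum>i<m. \<Sum>j<m. c i * c j * k (z i) (z j)) \<le> 1}"

end

theory Submission
  imports Defs
begin
lemma inner_pow_psd:
  fixes z :: "'i \<Rightarrow> 'a::euclidean_space" and e :: "'i \<Rightarrow> real"
  assumes "finite I"
  shows "0 \<le> (\<Sum>i\<in>I. \<Sum>j\<in>I. e i * e j * (inner (z i) (z j))^n)"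
proof (induction n arbitrary: e)
  case 0
  have "(\<Sum>i\<in>I. \<Sum>j\<in>I. e i * e j * (inner (z i) (z j))^0) = (\<Sum>i\<in>I. e i) * (\<Sum>j\<in>I. e j)"
    by (simp add: sum_product)
  then show ?case by simp
next
  case (Suc n)
  have "(\<Sum>i\<in>I. \<Sum>j\<in>I. e i * e j * (inner (z i) (z j))^Suc n)
     = (\<Sum>i\<in>I. \<Sum>j\<in>I. \<Sum>b\<in>Basis. (e i * inner (z i) b) * (e j * inner (z j) b) * (inner (z i) (z j))^n)"
    by (simp add: euclidean_inner[of "z _" "z _"] sum_distrib_left sum_distrib_right mult_ac)
  also have "\<dots> = (\<Sum>b\<in>Basis. \<Sum>i\<in>I. \<Sum>j\<in>I. (e i * inner (z i) b) * (e j * inner (z j) b) * (inner (z i) (z j))^n)"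
    by (simp add: sum.swap[of _ I Basis] sum.swap[of _ I "Basis"])
  also have "\<dots> \<ge> 0"
    by (rule sum_nonneg) (rule Suc)
  finally show ?case by simp
qed

lemma exp_psd_sum:
  fixes z :: "'i \<Rightarrow> 'a::euclidean_space" and e :: "'i \<Rightarrow> real"
  assumes "finite I" and "t \<ge> 0"
  shows "0 \<le> (\<Sum>i\<in>I. \<Sum>j\<in>I. e i * e j * exp (t * inner (z i) (z j)))"
proof -
  have s: "(\<lambda>n. \<Sum>i\<in>I. \<Sum>j\<in>I. e i * e j * ((t * inner (z i) (z j))^n /\<^sub>R fact n))
      sums (\<Sum>i\<in>I. \<Sum>j\<in>I. e i * e j * exp (t * inner (z i) (z j)))"
    by (intro sums_sum sums_mult exp_converges)
  have nn: "0 \<le> (\<Sum>i\<in>I. \<Sum>j\<in>I. e i * e j * ((t * inner (z i) (z j))^n /\<^sub>R fact n))" for n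
  proof -
    have "(\<Sum>i\<in>I. \<Sum>j\<in>I. e i * e j * ((t * inner (z i) (z j))^n /\<^sub>R fact n))
       = (t^n / fact n) * (\<Sum>i\<in>I. \<Sum>j\<in>I. e i * e j * (inner (z i) (z j))^n)"
      by (simp add: sum_distrib_left power_mult_distrib field_simps)
    also have "\<dots> \<ge> 0" using inner_pow_psd[OF assms(1), of e z n] assms(2) by simp
    finally show ?thesis by simp
  qed
  show ?thesis using sums_le[OF nn sums_zero s] by simp
qed

lemma gauss_psd:
  fixes z :: "'i \<Rightarrow> 'a::euclidean_space" and e :: "'i \<Rightarrow> real"
  assumes "finite I"
  shows "0 \<le> (\<Sum>i\<in>I. \<Sum>j\<in>I. e i * e j * gauss_kernel s (z i) (z j))"
proof -
  define c where "c = 1 / (2 * s\<^sup>2)"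
  have c: "c \<ge> 0" unfolding c_def by simp
  define E where "E i = e i * exp (- c * (norm (z i))\<^sup>2)" for i
  have "gauss_kernel s x y = exp (- c * (norm x)\<^sup>2) * exp (- c * (norm y)\<^sup>2) * exp (2 * c * inner x y)" for x y :: 'a
  proof -
    have "(norm (x - y))\<^sup>2 = (norm x)\<^sup>2 + (norm y)\<^sup>2 - 2 * inner x y"
      by (simp add: power2_norm_eq_inner inner_diff_left inner_diff_right inner_commute)
    then have "- (norm (x - y))\<^sup>2 / (2 * s\<^sup>2) = - c * (norm x)\<^sup>2 + - c * (norm y)\<^sup>2 + 2 * c * inner x y"
      unfolding c_def by (simp add: diff_divide_distrib add_divide_distrib)
    then show ?thesis unfolding gauss_kernel_def
      by (simp add: exp_add[symmetric])
  qed
  then have "(\<Sum>i\<in>I. \<Sum>j\<in>I. e i * e j * gauss_kernel s (z i) (z j))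
     = (\<Sum>i\<in>I. \<Sum>j\<in>I. E i * E j * exp ((2 * c) * inner (z i) (z j)))"
    unfolding E_def by (simp add: mult_ac)
  also have "\<dots> \<ge> 0" using exp_psd_sum[OF assms(1), of "2 * c" E z] c by simp
  finally show ?thesis by simp
qed

lemma quad_disc:
  fixes A B C :: real
  assumes "\<And>t. 0 \<le> A * t\<^sup>2 + 2 * B * t + C" "A \<ge> 0"
  shows "B\<^sup>2 \<le> A * C"
proof (cases "A = 0")
  case True
  show ?thesis
  proof (rule ccontr)
    assume "\<not> ?thesis"
    then have "B \<noteq> 0" using True by simp
    have "0 \<le> 2 * B * (- (C + 1) / (2 * B)) + C" using assms(1)[of "- (C + 1) / (2 * B)"] True by simp
    also have "\<dots> = -1" using \<open>B \<noteq> 0\<close> by (simp add: field_simps)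
    finally show False by simp
  qed
next
  case False
  then have A: "A > 0" using assms(2) by simp
  have "0 \<le> A * (- B / A)\<^sup>2 + 2 * B * (- B / A) + C" by (rule assms(1))
  also have "\<dots> = (A * C - B\<^sup>2) / A" using A by (simp add: field_simps power2_eq_square)
  finally show ?thesis using A by (simp add: zero_le_divide_iff)
qed

lemma rkhs_finite:
  fixes k :: "'a \<Rightarrow> 'a \<Rightarrow> real" and I :: "'b set" and d :: "'b \<Rightarrow> real" and w :: "'b \<Rightarrow> 'a"
  assumes sym: "\<And>x y. k x y = k y x"
    and psd: "\<And>(J::(nat + 'b) set) e p. finite J \<Longrightarrow> 0 \<le> (\<Sum>i\<in>J. \<Sum>j\<in>J. e i * e j * k (p i) (p j))"
    and fin: "finite I"
  shows "in_rkhs k (\<lambda>y. \<Sum>\<alpha>\<in>I. d \<alpha> * k (w \<alpha>) y) \<and>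
         rkhs_norm k (\<lambda>y. \<Sum>\<alpha>\<in>I. d \<alpha> * k (w \<alpha>) y) = sqrt (\<Sum>\<alpha>\<in>I. \<Sum>\<beta>\<in>I. d \<alpha> * d \<beta> * k (w \<alpha>) (w \<beta>))"
proof -
  define h where "h = (\<lambda>y. \<Sum>\<alpha>\<in>I. d \<alpha> * k (w \<alpha>) y)"
  define Q where "Q = (\<Sum>\<alpha>\<in>I. \<Sum>\<beta>\<in>I. d \<alpha> * d \<beta> * k (w \<alpha>) (w \<beta>))"
  define S where "S = {\<bar>\<Sum>i<m. c i * h (z i)\<bar> | (m::nat) c z.
      (\<Sum>i<m. \<Sum>j<m. c i * c j * k (z i) (z j)) \<le> 1}"
  have Q0: "Q \<ge> 0"
    using psd[of "{} <+> I" "case_sum (\<lambda>_. 0) d" "case_sum (\<lambda>_. w undefined) w"] fin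
    by (simp add: Q_def sum.Plus)
  have bound: "\<bar>\<Sum>i<m. c i * h (z i)\<bar> \<le> sqrt Q"
    if Qc1: "(\<Sum>i<m. \<Sum>j<m. c i * c j * k (z i) (z j)) \<le> 1" for m :: nat and c z
  proof -
    define Qc where "Qc = (\<Sum>i<m. \<Sum>j<m. c i * c j * k (z i) (z j))"
    define B where "B = (\<Sum>i<m. c i * h (z i))"
    have Qc0: "Qc \<ge> 0"
      using psd[of "{..<m} <+> {}" "case_sum c (\<lambda>_. 0)" "case_sum z (\<lambda>_. z 0)"]
      by (simp add: Qc_def sum.Plus)
    have B1: "B = (\<Sum>i<m. \<Sum>\<alpha>\<in>I. c i * d \<alpha> * k (z i) (w \<alpha>))"
      unfolding B_def h_def by (simp add: sum_distrib_left mult_ac sym)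
    have B2: "B = (\<Sum>\<alpha>\<in>I. \<Sum>i<m. d \<alpha> * c i * k (w \<alpha>) (z i))"
      unfolding B1 by (subst sum.swap) (simp add: mult_ac sym)
    have quad: "0 \<le> Qc * t\<^sup>2 + 2 * B * t + Q" for t
    proof -
      define e where "e = case_sum (\<lambda>i. t * c i) d"
      define p where "p = case_sum z w"
      have "0 \<le> (\<Sum>i\<in>{..<m} <+> I. \<Sum>j\<in>{..<m} <+> I. e i * e j * k (p i) (p j))"
        using psd fin by simp
      also have "\<dots> = (\<Sum>i<m. \<Sum>j<m. (t * c i) * (t * c j) * k (z i) (z j))
          + (\<Sum>i<m. \<Sum>\<alpha>\<in>I. (t * c i) * d \<alpha> * k (z i) (w \<alpha>))
          + ((\<Sum>\<alpha>\<in>I. \<Sum>i<m. d \<alpha> * (t * c i) * k (w \<alpha>) (z i))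
          + (\<Sum>\<alpha>\<in>I. \<Sum>\<beta>\<in>I. d \<alpha> * d \<beta> * k (w \<alpha>) (w \<beta>)))"
        by (simp add: sum.Plus[OF finite_lessThan fin] e_def p_def sum.distrib o_def)
      also have "\<dots> = Qc * t\<^sup>2 + 2 * B * t + Q"
      proof -
        have 1: "(\<Sum>i<m. \<Sum>j<m. (t * c i) * (t * c j) * k (z i) (z j)) = Qc * t\<^sup>2"
          unfolding Qc_def by (simp add: sum_distrib_left mult_ac power2_eq_square)
        have 2: "(\<Sum>i<m. \<Sum>\<alpha>\<in>I. (t * c i) * d \<alpha> * k (z i) (w \<alpha>)) = B * t"
          unfolding B1 by (simp add: sum_distrib_left mult_ac)
        have 3: "(\<Sum>\<alpha>\<in>I. \<Sum>i<m. d \<alpha> * (t * c i) * k (w \<alpha>) (z i)) = B * t"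
          unfolding B2 by (simp add: sum_distrib_left mult_ac)
        show ?thesis unfolding 1 2 3 Q_def by simp
      qed
      finally show ?thesis .
    qed
    have "B\<^sup>2 \<le> Qc * Q" by (rule quad_disc[OF quad Qc0])
    also have "\<dots> \<le> Q" using Qc1 Q0 Qc0 unfolding Qc_def[symmetric]
      by (simp add: mult_left_le_one_le)
    finally have "sqrt (B\<^sup>2) \<le> sqrt Q" by (rule real_sqrt_le_mono)
    then show ?thesis unfolding B_def by simp
  qed
  have ub: "s \<le> sqrt Q" if "s \<in> S" for s using that bound unfolding S_def by blast
  have zeroS: "0 \<in> S" unfolding S_def
    by (rule CollectI, rule exI[of _ 0], simp)
  have attain: "sqrt Q \<in> S"
  proof (cases "Q = 0")
    case True then show ?thesis using zeroS by simp
  next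
    case False
    then have Qp: "Q > 0" using Q0 by simp
    obtain \<phi> where phi: "bij_betw \<phi> {0..<card I} I" using ex_bij_betw_nat_finite[OF fin] by blast
    define c where "c i = d (\<phi> i) / sqrt Q" for i
    define z where "z i = w (\<phi> i)" for i
    have r: "(\<Sum>i<card I. F (\<phi> i)) = (\<Sum>\<alpha>\<in>I. F \<alpha>)" for F :: "'b \<Rightarrow> real"
      using sum.reindex_bij_betw[OF phi, of F] by (simp add: atLeast0LessThan)
    have r2: "(\<Sum>i<card I. \<Sum>j<card I. G (\<phi> i) (\<phi> j)) = (\<Sum>\<alpha>\<in>I. \<Sum>\<beta>\<in>I. G \<alpha> \<beta>)" for G :: "'b \<Rightarrow> 'b \<Rightarrow> real"
    proof -
      have "(\<Sum>i<card I. \<Sum>j<card I. G (\<phi> i) (\<phi> j)) = (\<Sum>i<card I. \<Sum>\<beta>\<in>I. G (\<phi> i) \<beta>)"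
        by (rule sum.cong[OF refl]) (rule r[of "G (\<phi> _)"])
      also have "\<dots> = (\<Sum>\<alpha>\<in>I. \<Sum>\<beta>\<in>I. G \<alpha> \<beta>)" by (rule r[of "\<lambda>\<alpha>. \<Sum>\<beta>\<in>I. G \<alpha> \<beta>"])
      finally show ?thesis .
    qed
    have "(\<Sum>i<card I. \<Sum>j<card I. c i * c j * k (z i) (z j)) = Q / (sqrt Q)\<^sup>2"
      unfolding c_def z_def Q_def
      using r2[of "\<lambda>\<alpha> \<beta>. d \<alpha> / sqrt Q * (d \<beta> / sqrt Q) * k (w \<alpha>) (w \<beta>)"]
      by (simp add: sum_divide_distrib power2_eq_square Q_def)
    also have "\<dots> = 1" using Qp by simp
    finally have c1: "(\<Sum>i<card I. \<Sum>j<card I. c i * c j * k (z i) (z j)) \<le> 1" by simp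
    have "(\<Sum>i<card I. c i * h (z i)) = Q / sqrt Q"
      unfolding c_def z_def h_def
      using r[of "\<lambda>\<alpha>. d \<alpha> / sqrt Q * (\<Sum>\<beta>\<in>I. d \<beta> * k (w \<beta>) (w \<alpha>))"]
      by (simp add: sum_divide_distrib sum_distrib_left mult_ac sym Q_def)
    also have "\<dots> = sqrt Q" using Qp by (simp add: real_div_sqrt)
    finally have "sqrt Q = \<bar>\<Sum>i<card I. c i * h (z i)\<bar>" using Q0 by simp
    then show ?thesis unfolding S_def using c1 by blast
  qed
  have bdd: "bdd_above S" using ub by (rule bdd_aboveI)
  have "Sup S = sqrt Q"
    by (rule antisym[OF cSup_least[OF _ ub] cSup_upper[OF attain bdd]]) (use zeroS in blast)
  then show ?thesis using bdd unfolding in_rkhs_def rkhs_norm_def S_def h_def Q_def by simp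
qed

lemma nsq: "(norm (p - q))\<^sup>2 = inner p p - 2 * inner p q + inner q q"
  for p q :: "'a::real_inner"
  by (simp add: power2_norm_eq_inner inner_diff_left inner_diff_right inner_commute)

lemma arith1a: "t \<noteq> 0 \<Longrightarrow> -p/(2*t) + -q/(2*t) = -(p+q)/(2*t)" for p q t :: real
  by (simp add: field_simps)
lemma arith1b: "t \<noteq> 0 \<Longrightarrow> -a/(2*(2*t)) + -b/(2*(t/2)) = -(a/2+2*b)/(2*t)" for a b t :: real
  by (simp add: field_simps)
lemma arith2: "-p/(2*(2*t)) + -q/(2*(2*t)) + -r/(2*(t/2)) = -(p+q+4*r)/(4*t)" for p q r t :: real
  by (cases "t=0") (simp_all add: field_simps)
lemma arith3: "-p/(2*(2*t)) + -q/(2*(2*t)) + -r/(2*(2*t)) + -u/(2*(2*t)) = -(p+q+r+u)/(4*t)" for p q r u t :: real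
  by (cases "t=0") (simp_all add: field_simps)

lemma prod_kernel:
  fixes u v y :: "'a::euclidean_space"
  assumes "\<sigma> > 0"
  shows "gauss_kernel \<sigma> u y * gauss_kernel \<sigma> v y
    = gauss_kernel (sqrt 2 * \<sigma>) u v * gauss_kernel (\<sigma> / sqrt 2) ((1/2) *\<^sub>R (u + v)) y"
proof -
  have e: "(norm (u - y))\<^sup>2 + (norm (v - y))\<^sup>2 = (norm (u - v))\<^sup>2 / 2 + 2 * (norm ((1/2) *\<^sub>R (u + v) - y))\<^sup>2"
    unfolding nsq by (simp add: inner_add_left inner_add_right inner_diff_left inner_diff_right inner_commute algebra_simps) (simp add: field_simps)
  have s1: "(sqrt 2 * \<sigma>)\<^sup>2 = 2 * \<sigma>\<^sup>2" by (simp add: power_mult_distrib)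
  have s2: "(\<sigma> / sqrt 2)\<^sup>2 = \<sigma>\<^sup>2 / 2" by (simp add: power_divide)
  have "- (norm (u - y))\<^sup>2 / (2 * \<sigma>\<^sup>2) + - (norm (v - y))\<^sup>2 / (2 * \<sigma>\<^sup>2)
     = - (norm (u - v))\<^sup>2 / (2 * (2 * \<sigma>\<^sup>2)) + - (norm ((1/2) *\<^sub>R (u + v) - y))\<^sup>2 / (2 * (\<sigma>\<^sup>2 / 2))"
    using arith1a[of "\<sigma>\<^sup>2" "(norm (u - y))\<^sup>2" "(norm (v - y))\<^sup>2"]
      arith1b[of "\<sigma>\<^sup>2" "(norm (u - v))\<^sup>2" "(norm ((1/2) *\<^sub>R (u + v) - y))\<^sup>2"] e assms
    by simp
  then show ?thesis unfolding gauss_kernel_def s1 s2 by (simp add: exp_add[symmetric])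
qed

lemma four_point:
  fixes A B C D :: "'a::euclidean_space"
  assumes "\<sigma> > 0"
  shows "gauss_kernel (sqrt 2 * \<sigma>) A B * gauss_kernel (sqrt 2 * \<sigma>) C D *
     gauss_kernel (\<sigma> / sqrt 2) ((1/2) *\<^sub>R (A + B)) ((1/2) *\<^sub>R (C + D))
   = gauss_kernel (sqrt 2 * \<sigma>) A C * gauss_kernel (sqrt 2 * \<sigma>) C B *
     gauss_kernel (sqrt 2 * \<sigma>) B D * gauss_kernel (sqrt 2 * \<sigma>) D A"
proof -
  have e: "(norm (A - B))\<^sup>2 + (norm (C - D))\<^sup>2 + 4 * (norm ((1/2) *\<^sub>R (A + B) - (1/2) *\<^sub>R (C + D)))\<^sup>2
     = (norm (A - C))\<^sup>2 + (norm (C - B))\<^sup>2 + (norm (B - D))\<^sup>2 + (norm (D - A))\<^sup>2"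
    unfolding nsq by (simp add: inner_add_left inner_add_right inner_diff_left inner_diff_right inner_commute algebra_simps)
  have s1: "(sqrt 2 * \<sigma>)\<^sup>2 = 2 * \<sigma>\<^sup>2" by (simp add: power_mult_distrib)
  have s2: "(\<sigma> / sqrt 2)\<^sup>2 = \<sigma>\<^sup>2 / 2" by (simp add: power_divide)
  have "- (norm (A - B))\<^sup>2 / (2 * (2 * \<sigma>\<^sup>2)) + - (norm (C - D))\<^sup>2 / (2 * (2 * \<sigma>\<^sup>2)) +
        - (norm ((1/2) *\<^sub>R (A + B) - (1/2) *\<^sub>R (C + D)))\<^sup>2 / (2 * (\<sigma>\<^sup>2 / 2))
     = - (norm (A - C))\<^sup>2 / (2 * (2 * \<sigma>\<^sup>2)) + - (norm (C - B))\<^sup>2 / (2 * (2 * \<sigma>\<^sup>2)) +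
       - (norm (B - D))\<^sup>2 / (2 * (2 * \<sigma>\<^sup>2)) + - (norm (D - A))\<^sup>2 / (2 * (2 * \<sigma>\<^sup>2))"
    using arith2[of "(norm (A - B))\<^sup>2" "\<sigma>\<^sup>2" "(norm (C - D))\<^sup>2" "(norm ((1/2) *\<^sub>R (A + B) - (1/2) *\<^sub>R (C + D)))\<^sup>2"]
          arith3[of "(norm (A - C))\<^sup>2" "\<sigma>\<^sup>2" "(norm (C - B))\<^sup>2" "(norm (B - D))\<^sup>2" "(norm (D - A))\<^sup>2"] e
    by simp
  then show ?thesis unfolding gauss_kernel_def s1 s2 by (simp add: exp_add[symmetric])
qed

lemma diag_mult:
  assumes "K = mat n n (\<lambda>(i, j). G i j)" "Da = mat n n (\<lambda>(i, j). if i = j then a i else 0)"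
  shows "Da * K = mat n n (\<lambda>(i, j). a i * G i j)"
  by (rule eq_matI) (auto simp: assms scalar_prod_def sum.delta if_distrib[of "\<lambda>t. t * _"] cong: if_cong)

lemma sq_mat:
  shows "(mat n n (\<lambda>(i, j). M i j)) ^\<^sub>m 2 = mat n n (\<lambda>(i, j). \<Sum>k<n. M i k * M k j)"
  by (rule eq_matI) (auto simp: numeral_2_eq_2 scalar_prod_def atLeast0LessThan)

lemma trace_mult:
  shows "trace (mat n n (\<lambda>(i, j). M i j) * mat n n (\<lambda>(i, j). N i j)) = (\<Sum>i<n. \<Sum>j<n. M i j * N j i)"
  unfolding trace_def by (simp add: scalar_prod_def atLeast0LessThan)


lemma cp: "(\<Sum>p\<in>A \<times> B. h p) = (\<Sum>i\<in>A. \<Sum>j\<in>B. h (i, j))"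
  by (simp add: sum.cartesian_product)

theorem corollary4:
  fixes \<sigma> :: real and n :: nat
    and x :: "nat \<Rightarrow> 'a::euclidean_space"
    and a b :: "nat \<Rightarrow> real"
    and f g :: "'a \<Rightarrow> real"
    and K Da Db :: "real mat"
  assumes "\<sigma> > 0"
    and "f = (\<lambda>y. \<Sum>i<n. a i * gauss_kernel \<sigma> (x i) y)"
    and "g = (\<lambda>y. \<Sum>i<n. b i * gauss_kernel \<sigma> (x i) y)"
    and "K = mat n n (\<lambda>(i, j). gauss_kernel (sqrt 2 * \<sigma>) (x i) (x j))"
    and "Da = mat n n (\<lambda>(i, j). if i = j then a i else 0)"
    and "Db = mat n n (\<lambda>(i, j). if i = j then b i else 0)"
  shows "in_rkhs (gauss_kernel (\<sigma> / sqrt 2)) (\<lambda>y. f y * g y) \<and>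
         (rkhs_norm (gauss_kernel (\<sigma> / sqrt 2)) (\<lambda>y. f y * g y))\<^sup>2
           = trace ((Da * K) ^\<^sub>m 2 * (Db * K) ^\<^sub>m 2)"
proof -
  define k' :: "'a \<Rightarrow> 'a \<Rightarrow> real" where "k' = gauss_kernel (\<sigma> / sqrt 2)"
  define G where "G i j = gauss_kernel (sqrt 2 * \<sigma>) (x i) (x j)" for i j
  define w where "w = (\<lambda>(i::nat, j::nat). (1/2) *\<^sub>R (x i + x j))"
  define d where "d = (\<lambda>(i::nat, j::nat). a i * b j * G i j)"
  define I where "I = {..<n} \<times> {..<n}"
  have finI: "finite I" unfolding I_def by simp
  have fg: "(\<lambda>y. f y * g y) = (\<lambda>y. \<Sum>p\<in>I. d p * k' (w p) y)"
  proof
    fix y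
    have "f y * g y = (\<Sum>i<n. \<Sum>j<n. a i * b j * (gauss_kernel \<sigma> (x i) y * gauss_kernel \<sigma> (x j) y))"
      unfolding assms(2,3) by (simp add: sum_product mult_ac)
    also have "\<dots> = (\<Sum>i<n. \<Sum>j<n. d (i, j) * k' (w (i, j)) y)"
      unfolding prod_kernel[OF assms(1)] d_def w_def k'_def G_def by (simp add: mult_ac)
    also have "\<dots> = (\<Sum>p\<in>I. d p * k' (w p) y)"
      unfolding I_def sum.cartesian_product by (simp add: case_prod_beta')
    finally show "f y * g y = (\<Sum>p\<in>I. d p * k' (w p) y)" .
  qed
  have sym: "k' u v = k' v u" for u v
    unfolding k'_def gauss_kernel_def by (simp add: norm_minus_commute)
  have R: "in_rkhs k' (\<lambda>y. \<Sum>p\<in>I. d p * k' (w p) y) \<and>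
         rkhs_norm k' (\<lambda>y. \<Sum>p\<in>I. d p * k' (w p) y) = sqrt (\<Sum>p\<in>I. \<Sum>q\<in>I. d p * d q * k' (w p) (w q))"
    by (rule rkhs_finite[OF sym _ finI]) (unfold k'_def, rule gauss_psd)
  define Q where "Q = (\<Sum>p\<in>I. \<Sum>q\<in>I. d p * d q * k' (w p) (w q))"
  have Q0: "Q \<ge> 0" unfolding Q_def k'_def by (rule gauss_psd[OF finI])
  have "Q = (\<Sum>i<n. \<Sum>j<n. \<Sum>k<n. \<Sum>l<n. d (i, j) * d (k, l) * k' (w (i, j)) (w (k, l)))"
    unfolding Q_def I_def by (simp only: cp)
  also have "\<dots> = (\<Sum>i<n. \<Sum>j<n. \<Sum>k<n. \<Sum>l<n. a i * b j * a k * b l * (G i k * G k j * G j l * G l i))"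
  proof -
    have "d (i, j) * d (k, l) * k' (w (i, j)) (w (k, l)) = a i * b j * a k * b l * (G i k * G k j * G j l * G l i)"
      for i j k l
    proof -
      have "d (i, j) * d (k, l) * k' (w (i, j)) (w (k, l)) = a i * b j * a k * b l * (G i j * G k l * k' (w (i, j)) (w (k, l)))"
        unfolding d_def by (simp add: mult_ac)
      also have "G i j * G k l * k' (w (i, j)) (w (k, l)) = G i k * G k j * G j l * G l i"
        unfolding G_def k'_def w_def using four_point[OF assms(1), of "x i" "x j" "x k" "x l"] by simp
      finally show ?thesis .
    qed
    then show ?thesis by simp
  qed
  also have "\<dots> = trace ((Da * K) ^\<^sub>m 2 * (Db * K) ^\<^sub>m 2)"
  proof -
    have K: "K = mat n n (\<lambda>(i, j). G i j)" unfolding assms(4) G_def by simp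
    have "trace ((Da * K) ^\<^sub>m 2 * (Db * K) ^\<^sub>m 2)
       = (\<Sum>i<n. \<Sum>j<n. (\<Sum>k<n. a i * G i k * (a k * G k j)) * (\<Sum>l<n. b j * G j l * (b l * G l i)))"
      unfolding diag_mult[OF K assms(5)] diag_mult[OF K assms(6)] sq_mat trace_mult ..
    also have "\<dots> = (\<Sum>i<n. \<Sum>j<n. \<Sum>k<n. \<Sum>l<n. a i * b j * a k * b l * (G i k * G k j * G j l * G l i))"
      by (simp add: sum_product mult_ac)
    finally show ?thesis by simp
  qed
  finally have QT: "Q = trace ((Da * K) ^\<^sub>m 2 * (Db * K) ^\<^sub>m 2)" .
  show ?thesis using R Q0 unfolding fg[symmetric] k'_def[symmetric] Q_def[symmetric] QT[symmetric] by simp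
qed
end
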